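(* Let $(M,\phi,\xi,\eta,g)$ be a (connected) almost contact metric manifold with a $\phi$-invariant distribution $\mathcal{V}$, and let $\mathcal{H}=\mathcal{V}^\perp$. Then $\xi\in\Gamma(\mathcal{V})$ or $\xi\in\Gamma(\mathcal{H})$. Moreover, if $\xi\in\Gamma(\mathcal{V})$, then $\mathcal{H}\subseteq\mathcal{D}=\ker\eta$.
   Context: Almost contact metric structure: $(\phi,\xi,\eta,g)$ with $\phi$ a $(1,1)$-tensor, $\xi$ a vector field, $\eta$ a 1-form, $g$ Riemannian, $\phi^2=-I+\eta\otimes\xi$, $\eta(\xi)=1$, $g(\phi X,\phi Y)=g(X,Y)-\eta(X)\eta(Y)$. A distribution $\mathcal{V}$ is $\phi$-invariant if $\phi(\mathcal{V})\subseteq\mathcal{V}$. *)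

theory Defs
  imports "HOL-Analysis.Analysis"
begin

text \<open>Model of a manifold with its tangent bundle: M is a (connected) topological space
  (a subset of 'm with the subspace topology), and the tangent space at p is a linear
  subspace T p of a fixed finite-dimensional real vector space 'v (e.g. via an embedding
  into Euclidean space).  Tensor fields are given fibrewise; their regularity is
  expressed by continuity along continuous local vector fields.\<close>

definition cont_distribution ::
  "'m::topological_space set \<Rightarrow> ('m \<Rightarrow> 'v::euclidean_space set) \<Rightarrow> ('m \<Rightarrow> 'v set) \<Rightarrow> nat \<Rightarrow> bool" where
  "cont_distribution M T D k \<longleftrightarrow>
     (\<forall>p\<in>M. subspace (D p) \<and> D p \<subseteq> T p \<and> dim (D p) = k) \<and>
     (\<forall>p\<in>M. \<exists>U X. open U \<and> p \<in> U \<and>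
        (\<forall>i<k. continuous_on (U \<inter> M) (X i)) \<and>
        (\<forall>q\<in>U \<inter> M. D q = span ((\<lambda>i. X i q) ` {..<k})))"

definition cont_field ::
  "'m::topological_space set \<Rightarrow> ('m \<Rightarrow> 'v::euclidean_space set) \<Rightarrow> 'm set \<Rightarrow> ('m \<Rightarrow> 'v) \<Rightarrow> bool" where
  "cont_field M T U X \<longleftrightarrow> continuous_on (U \<inter> M) X \<and> (\<forall>q\<in>U \<inter> M. X q \<in> T q)"

definition acms_at ::
  "('v::euclidean_space set) \<Rightarrow> ('v \<Rightarrow> 'v) \<Rightarrow> 'v \<Rightarrow> ('v \<Rightarrow> real) \<Rightarrow> ('v \<Rightarrow> 'v \<Rightarrow> real) \<Rightarrow> bool" where
  "acms_at Tp ph xi eta g \<longleftrightarrow>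
     subspace Tp \<and> xi \<in> Tp \<and>
     (\<forall>X\<in>Tp. ph X \<in> Tp) \<and>
     (\<forall>X\<in>Tp. \<forall>Y\<in>Tp. \<forall>a b::real. ph (a *\<^sub>R X + b *\<^sub>R Y) = a *\<^sub>R ph X + b *\<^sub>R ph Y) \<and>
     (\<forall>X\<in>Tp. \<forall>Y\<in>Tp. \<forall>a b::real. eta (a *\<^sub>R X + b *\<^sub>R Y) = a * eta X + b * eta Y) \<and>
     (\<forall>X\<in>Tp. \<forall>Y\<in>Tp. \<forall>Z\<in>Tp. \<forall>a b::real. g (a *\<^sub>R X + b *\<^sub>R Y) Z = a * g X Z + b * g Y Z) \<and>
     (\<forall>X\<in>Tp. \<forall>Y\<in>Tp. g X Y = g Y X) \<and>
     (\<forall>X\<in>Tp. X \<noteq> 0 \<longrightarrow> g X X > 0) \<and>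
     (\<forall>X\<in>Tp. ph (ph X) = - X + eta X *\<^sub>R xi) \<and>
     eta xi = 1 \<and>
     (\<forall>X\<in>Tp. \<forall>Y\<in>Tp. g (ph X) (ph Y) = g X Y - eta X * eta Y)"

definition almost_contact_metric_manifold ::
  "'m::topological_space set \<Rightarrow> ('m \<Rightarrow> 'v::euclidean_space set) \<Rightarrow> ('m \<Rightarrow> 'v \<Rightarrow> 'v) \<Rightarrow> ('m \<Rightarrow> 'v)
    \<Rightarrow> ('m \<Rightarrow> 'v \<Rightarrow> real) \<Rightarrow> ('m \<Rightarrow> 'v \<Rightarrow> 'v \<Rightarrow> real) \<Rightarrow> bool" where
  "almost_contact_metric_manifold M T ph xi eta g \<longleftrightarrow>
     (\<exists>n. cont_distribution M T T n) \<and>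
     (\<forall>p\<in>M. acms_at (T p) (ph p) (xi p) (eta p) (g p)) \<and>
     cont_field M T UNIV xi \<and>
     (\<forall>U X Y. open U \<longrightarrow> cont_field M T U X \<longrightarrow> cont_field M T U Y \<longrightarrow>
        continuous_on (U \<inter> M) (\<lambda>q. ph q (X q)) \<and>
        continuous_on (U \<inter> M) (\<lambda>q. eta q (X q)) \<and>
        continuous_on (U \<inter> M) (\<lambda>q. g q (X q) (Y q)))"

definition phi_invariant :: "'m set \<Rightarrow> ('m \<Rightarrow> 'v \<Rightarrow> 'v) \<Rightarrow> ('m \<Rightarrow> 'v set) \<Rightarrow> bool" where
  "phi_invariant M ph V \<longleftrightarrow> (\<forall>p\<in>M. \<forall>X\<in>V p. ph p X \<in> V p)"

definition orth_distribution ::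
  "('m \<Rightarrow> 'v set) \<Rightarrow> ('m \<Rightarrow> 'v \<Rightarrow> 'v \<Rightarrow> real) \<Rightarrow> ('m \<Rightarrow> 'v set) \<Rightarrow> 'm \<Rightarrow> 'v set" where
  "orth_distribution T g V p = {X \<in> T p. \<forall>Y\<in>V p. g p X Y = 0}"

definition section_of :: "'m set \<Rightarrow> ('m \<Rightarrow> 'v) \<Rightarrow> ('m \<Rightarrow> 'v set) \<Rightarrow> bool" where
  "section_of M X D \<longleftrightarrow> (\<forall>p\<in>M. X p \<in> D p)"

end

theory Submission
  imports Defs
begin

lemma even_dim_aux:
  fixes W :: "'v::euclidean_space set" and J :: "'v \<Rightarrow> 'v"
  assumes W: "subspace W" and JW: "\<forall>x\<in>W. J x \<in> W"
    and Jadd: "\<forall>x\<in>W. \<forall>y\<in>W. J (x + y) = J x + J y"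
    and Jsc: "\<forall>x\<in>W. \<forall>c. J (c *\<^sub>R x) = c *\<^sub>R J x"
    and JJ: "\<forall>x\<in>W. J (J x) = - x"
  shows "subspace S \<Longrightarrow> S \<subseteq> W \<Longrightarrow> (\<forall>x\<in>S. J x \<in> S) \<Longrightarrow> even (dim W - dim S)"
proof (induction "dim W - dim S" arbitrary: S rule: less_induct)
  case less
  show ?case
  proof (cases "W \<subseteq> S")
    case True
    then have "S = W" using less.prems by auto
    then show ?thesis by simp
  next
    case False
    then obtain w where w: "w \<in> W" "w \<notin> S" by auto
    have spS: "span S = S" using less.prems(1) by (simp add: span_eq_iff)
    have Jw: "J w \<in> W" using JW w by auto
    have notin: "J w \<notin> span (insert w S)"
    proof
      assume "J w \<in> span (insert w S)"
      then obtain c where c: "J w - c *\<^sub>R w \<in> S" using spS by (auto simp: span_insert)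
      define s where "s = J w - c *\<^sub>R w"
      have sW: "s \<in> W" using c less.prems(2) s_def by auto
      have cw: "c *\<^sub>R w \<in> W" using w W by (simp add: subspace_scale)
      have eq: "J w = s + c *\<^sub>R w" by (simp add: s_def)
      have "- w = J (s + c *\<^sub>R w)" using JJ w eq by metis
      also have "\<dots> = J s + c *\<^sub>R J w" using Jadd Jsc sW cw w by simp
      also have "\<dots> = J s + c *\<^sub>R s + (c * c) *\<^sub>R w" using eq by (simp add: algebra_simps)
      finally have h: "- w = J s + c *\<^sub>R s + (c * c) *\<^sub>R w" .
      have "J s + c *\<^sub>R s = - w - (c * c) *\<^sub>R w" using h by (simp add: algebra_simps)
      then have "(1 + c * c) *\<^sub>R w = - (J s + c *\<^sub>R s)" by (simp only: scaleR_add_left) simp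
      moreover have "- (J s + c *\<^sub>R s) \<in> S"
        using less.prems c s_def by (metis subspace_add subspace_neg subspace_scale)
      ultimately have "(1 + c * c) *\<^sub>R w \<in> S" by simp
      then have "inverse (1 + c * c) *\<^sub>R ((1 + c * c) *\<^sub>R w) \<in> S"
        using less.prems(1) subspace_scale by blast
      moreover have "1 + c * c \<noteq> 0" using zero_le_square[of c] by linarith
      ultimately have "w \<in> S" by simp
      then show False using w by simp
    qed
    define S2 where "S2 = span (insert (J w) (insert w S))"
    have dimS2: "dim S2 = dim S + 2"
      using notin w spS by (simp add: S2_def dim_insert del: span_eq_iff)
    have S2W: "S2 \<subseteq> W" unfolding S2_def
      using span_minimal[of "insert (J w) (insert w S)" W] W w Jw less.prems(2) by auto
    have S2J: "\<forall>x\<in>S2. J x \<in> S2"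
    proof
      fix x assume x: "x \<in> S2"
      then obtain b where "x - b *\<^sub>R J w \<in> span (insert w S)" by (auto simp: S2_def span_insert)
      then obtain a where a: "x - b *\<^sub>R J w - a *\<^sub>R w \<in> S" using spS by (auto simp: span_insert)
      define s where "s = x - b *\<^sub>R J w - a *\<^sub>R w"
      have sW: "s \<in> W" using a less.prems(2) s_def by auto
      have xe: "x = s + (a *\<^sub>R w + b *\<^sub>R J w)" by (simp add: s_def algebra_simps)
      have awW: "a *\<^sub>R w \<in> W" "b *\<^sub>R J w \<in> W" using w Jw W by (auto simp: subspace_scale)
      have "J x = J s + (a *\<^sub>R J w + b *\<^sub>R J (J w))"
        using xe Jadd Jsc sW awW w Jw W by (simp add: subspace_add)
      also have "\<dots> = J s + a *\<^sub>R J w - b *\<^sub>R w" using JJ w by simp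
      finally have Jx: "J x = J s + a *\<^sub>R J w - b *\<^sub>R w" .
      have "J s \<in> S" using less.prems(3) a s_def by auto
      then have "J s \<in> S2" unfolding S2_def by (meson span_base insertI2 subsetD)
      moreover have "J w \<in> S2" "w \<in> S2" unfolding S2_def by (auto intro: span_base)
      ultimately show "J x \<in> S2" using Jx unfolding S2_def
        by (metis span_add span_diff span_scale)
    qed
    have le: "dim S2 \<le> dim W" using S2W by (rule dim_subset)
    have "even (dim W - dim S2)"
      using less.hyps[of S2] dimS2 le S2W S2J by (simp add: S2_def subspace_span)
    then show ?thesis using dimS2 le by (simp add: S2_def)
  qed
qed

lemma even_dim:
  fixes W :: "'v::euclidean_space set" and J :: "'v \<Rightarrow> 'v"
  assumes W: "subspace W" and JW: "\<forall>x\<in>W. J x \<in> W"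
    and Jadd: "\<forall>x\<in>W. \<forall>y\<in>W. J (x + y) = J x + J y"
    and Jsc: "\<forall>x\<in>W. \<forall>c. J (c *\<^sub>R x) = c *\<^sub>R J x"
    and JJ: "\<forall>x\<in>W. J (J x) = - x"
  shows "even (dim W)"
proof -
  have "J 0 = 0" using Jsc W by (metis scale_zero_left subspace_0)
  then have "even (dim W - dim {0::'v})"
    using even_dim_aux[OF assms, of "{0}"] W by (auto simp: subspace_0)
  then show ?thesis by simp
qed

lemma acms_facts:
  assumes A: "acms_at Tp ph xi eta g"
  shows "subspace Tp" "xi \<in> Tp" "\<And>X. X \<in> Tp \<Longrightarrow> ph X \<in> Tp"
    and "\<And>X Y. X \<in> Tp \<Longrightarrow> Y \<in> Tp \<Longrightarrow> ph (X + Y) = ph X + ph Y"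
    and "\<And>X c. X \<in> Tp \<Longrightarrow> ph (c *\<^sub>R X) = c *\<^sub>R ph X"
    and "\<And>X Y. X \<in> Tp \<Longrightarrow> Y \<in> Tp \<Longrightarrow> eta (X + Y) = eta X + eta Y"
    and "\<And>X c. X \<in> Tp \<Longrightarrow> eta (c *\<^sub>R X) = c * eta X"
    and "\<And>X. X \<in> Tp \<Longrightarrow> ph (ph X) = - X + eta X *\<^sub>R xi"
    and "eta xi = 1"
    and "\<And>X. X \<in> Tp \<Longrightarrow> eta X = g X xi"
    and "\<And>X. X \<in> Tp \<Longrightarrow> g X xi = g xi X"
    and "\<And>X. X \<in> Tp \<Longrightarrow> eta (ph X) = 0"
    and "eta 0 = 0"
proof -
  note D = A[unfolded acms_at_def]
  show T: "subspace Tp" "xi \<in> Tp" "\<And>X. X \<in> Tp \<Longrightarrow> ph X \<in> Tp" using D by auto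
  show padd: "\<And>X Y. X \<in> Tp \<Longrightarrow> Y \<in> Tp \<Longrightarrow> ph (X + Y) = ph X + ph Y"
  proof -
    fix X Y assume "X \<in> Tp" "Y \<in> Tp"
    then have "ph (1 *\<^sub>R X + 1 *\<^sub>R Y) = 1 *\<^sub>R ph X + 1 *\<^sub>R ph Y" using D by blast
    then show "ph (X + Y) = ph X + ph Y" by simp
  qed
  show psc: "\<And>X c. X \<in> Tp \<Longrightarrow> ph (c *\<^sub>R X) = c *\<^sub>R ph X"
  proof -
    fix X c assume "X \<in> Tp"
    then have "ph (c *\<^sub>R X + 0 *\<^sub>R X) = c *\<^sub>R ph X + 0 *\<^sub>R ph X" using D by blast
    then show "ph (c *\<^sub>R X) = c *\<^sub>R ph X" by simp
  qed
  show eadd: "\<And>X Y. X \<in> Tp \<Longrightarrow> Y \<in> Tp \<Longrightarrow> eta (X + Y) = eta X + eta Y"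
  proof -
    fix X Y assume "X \<in> Tp" "Y \<in> Tp"
    then have "eta (1 *\<^sub>R X + 1 *\<^sub>R Y) = 1 * eta X + 1 * eta Y" using D by blast
    then show "eta (X + Y) = eta X + eta Y" by simp
  qed
  show esc: "\<And>X c. X \<in> Tp \<Longrightarrow> eta (c *\<^sub>R X) = c * eta X"
  proof -
    fix X c assume "X \<in> Tp"
    then have "eta (c *\<^sub>R X + 0 *\<^sub>R X) = c * eta X + 0 * eta X" using D by blast
    then show "eta (c *\<^sub>R X) = c * eta X" by simp
  qed
  show pp: "\<And>X. X \<in> Tp \<Longrightarrow> ph (ph X) = - X + eta X *\<^sub>R xi" using D by blast
  show e1: "eta xi = 1" using D by blast
  show gs: "\<And>X. X \<in> Tp \<Longrightarrow> g X xi = g xi X" using D by blast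
  have g0: "\<And>Z. Z \<in> Tp \<Longrightarrow> g 0 Z = 0"
  proof -
    fix Z assume "Z \<in> Tp"
    then have "g (0 *\<^sub>R Z + 0 *\<^sub>R Z) Z = 0 * g Z Z + 0 * g Z Z" using D by blast
    then show "g 0 Z = 0" by simp
  qed
  have ph0: "ph 0 = 0" using psc[of xi 0] T by simp
  show e0: "eta 0 = 0" using esc[of xi 0] T by simp
  have xi0: "xi \<noteq> 0" using e1 e0 by auto
  have ppxi: "ph (ph xi) = 0" using pp[of xi] e1 T by simp
  have pxT: "ph xi \<in> Tp" using T by blast
  have "ph (ph (ph xi)) = 0" using ppxi ph0 by simp
  then have "- ph xi + eta (ph xi) *\<^sub>R xi = 0" using pp[OF pxT] by simp
  then have pxe: "ph xi = eta (ph xi) *\<^sub>R xi" by (simp add: algebra_simps)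
  then have "ph (ph xi) = eta (ph xi) *\<^sub>R ph xi" using psc T by metis
  also have "\<dots> = (eta (ph xi) * eta (ph xi)) *\<^sub>R xi" using pxe by (metis scaleR_scaleR)
  finally have "eta (ph xi) * eta (ph xi) = 0" using ppxi xi0 by simp
  then have "eta (ph xi) = 0" by simp
  then have pxi: "ph xi = 0" using pxe by simp
  show epx: "\<And>X. X \<in> Tp \<Longrightarrow> eta (ph X) = 0"
  proof -
    fix X assume X: "X \<in> Tp"
    have pX: "ph X \<in> Tp" using X T by blast
    have mX: "- X \<in> Tp" "eta X *\<^sub>R xi \<in> Tp" using X T by (auto simp: subspace_neg subspace_scale)
    have "ph (ph (ph X)) = ph (- X + eta X *\<^sub>R xi)" by (simp only: pp[OF X])
    also have "\<dots> = ph (- X) + ph (eta X *\<^sub>R xi)" by (rule padd[OF mX])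
    also have "\<dots> = - ph X" using psc[of X "-1"] psc[of xi "eta X"] X T pxi by simp
    finally have "- ph X = - ph X + eta (ph X) *\<^sub>R xi" using pp[OF pX] by simp
    then show "eta (ph X) = 0" using xi0 by simp
  qed
  show "\<And>X. X \<in> Tp \<Longrightarrow> eta X = g X xi"
  proof -
    fix X assume X: "X \<in> Tp"
    have "g (ph X) (ph xi) = g X xi - eta X * eta xi" using D X T by blast
    moreover have "g (ph X) (ph xi) = 0"
    proof -
      have pX: "ph X \<in> Tp" using X T by blast
      have "g (ph X) (ph xi) = g (ph xi) (ph X)" using D pX pxT by blast
      also have "\<dots> = 0" using g0[OF pX] pxi by simp
      finally show ?thesis .
    qed
    ultimately have "0 = g X xi - eta X" using e1 by simp
    then show "eta X = g X xi" by simp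
  qed
qed


lemma pointwise:
  fixes V :: "'v::euclidean_space set"
  assumes A: "acms_at Tp ph xi eta g" and V: "subspace V" "V \<subseteq> Tp"
    and inv: "\<forall>X\<in>V. ph X \<in> V"
  shows "xi \<in> V \<Longrightarrow> odd (dim V)"
    and "xi \<notin> V \<Longrightarrow> even (dim V) \<and> (\<forall>Y\<in>V. g xi Y = 0)"
proof -
  note F = acms_facts[OF A]
  have VT: "\<And>X. X \<in> V \<Longrightarrow> X \<in> Tp" using V by auto
  {
    assume xV: "xi \<in> V"
    define W0 where "W0 = {X \<in> V. eta X = 0}"
    have W0s: "subspace W0" unfolding subspace_def
    proof (intro conjI ballI allI)
      show "0 \<in> W0" unfolding W0_def using V(1) F(13) by (simp add: subspace_0)
      fix x y assume x: "x \<in> W0" and y: "y \<in> W0"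
      then show "x + y \<in> W0" unfolding W0_def using V(1) F(6)[of x y] VT
        by (simp add: subspace_add)
    next
      fix c x assume x: "x \<in> W0"
      then show "c *\<^sub>R x \<in> W0" unfolding W0_def using V(1) F(7)[of x c] VT
        by (simp add: subspace_scale)
    qed
    have eW: "\<And>X. X \<in> W0 \<Longrightarrow> ph X \<in> W0" unfolding W0_def using inv F(12) VT by auto
    have "even (dim W0)"
    proof (rule even_dim[OF W0s])
      show "\<forall>x\<in>W0. ph x \<in> W0" using eW by auto
      show "\<forall>x\<in>W0. \<forall>y\<in>W0. ph (x + y) = ph x + ph y" using F(4) VT W0_def by auto
      show "\<forall>x\<in>W0. \<forall>c. ph (c *\<^sub>R x) = c *\<^sub>R ph x" using F(5) VT W0_def by auto
      show "\<forall>x\<in>W0. ph (ph x) = - x" using F(8) VT W0_def by auto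
    qed
    have spW: "span W0 = W0" using W0s by simp
    have xiW: "xi \<notin> W0" using F(9) W0_def by auto
    have "V = span (insert xi W0)"
    proof
      show "V \<subseteq> span (insert xi W0)"
      proof
        fix X assume X: "X \<in> V"
        have mx: "- (eta X *\<^sub>R xi) \<in> Tp" using F(1) VT xV by (simp add: subspace_neg subspace_scale)
        have "X - eta X *\<^sub>R xi \<in> V" using X xV V(1) by (simp add: subspace_diff subspace_scale)
        moreover have "eta (X - eta X *\<^sub>R xi) = 0"
          using F(6)[of X "(- eta X) *\<^sub>R xi"] F(7)[of xi "- eta X"] F(9) VT X xV F(1) mx
          by simp
        ultimately have "X - eta X *\<^sub>R xi \<in> span W0" unfolding W0_def by (auto intro: span_base)
        then show "X \<in> span (insert xi W0)" by (auto simp: span_insert)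
      qed
      show "span (insert xi W0) \<subseteq> V" using span_minimal[of "insert xi W0" V] V xV W0_def by auto
    qed
    then have "dim V = dim W0 + 1" using xiW spW by (simp add: dim_insert del: span_eq_iff)
    then show "odd (dim V)" using \<open>even (dim W0)\<close> by simp
  }
  {
    assume xV: "xi \<notin> V"
    have e0: "\<And>X. X \<in> V \<Longrightarrow> eta X = 0"
    proof (rule ccontr)
      fix X assume X: "X \<in> V" and ne: "eta X \<noteq> 0"
      have "ph (ph X) + X \<in> V" using inv X V(1) by (simp add: subspace_add)
      then have "eta X *\<^sub>R xi \<in> V" using F(8) VT X by simp
      then have "inverse (eta X) *\<^sub>R (eta X *\<^sub>R xi) \<in> V" using V(1) subspace_scale by blast
      then show False using ne xV by simp
    qed
    have "even (dim V)"
    proof (rule even_dim[OF V(1)])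
      show "\<forall>x\<in>V. ph x \<in> V" using inv by auto
      show "\<forall>x\<in>V. \<forall>y\<in>V. ph (x + y) = ph x + ph y" using F(4) VT by auto
      show "\<forall>x\<in>V. \<forall>c. ph (c *\<^sub>R x) = c *\<^sub>R ph x" using F(5) VT by auto
      show "\<forall>x\<in>V. ph (ph x) = - x" using F(8) VT e0 by auto
    qed
    moreover have "\<forall>Y\<in>V. g xi Y = 0"
    proof
      fix Y assume Y: "Y \<in> V"
      have "g xi Y = g Y xi" using F(11)[OF VT[OF Y]] by simp
      also have "\<dots> = eta Y" using F(10)[OF VT[OF Y]] by simp
      finally show "g xi Y = 0" using e0[OF Y] by simp
    qed
    ultimately show "even (dim V) \<and> (\<forall>Y\<in>V. g xi Y = 0)" by simp
  }
qed

theorem lemma2p1: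
  fixes M :: "'m::topological_space set"
    and T :: "'m \<Rightarrow> 'v::euclidean_space set"
    and ph :: "'m \<Rightarrow> 'v \<Rightarrow> 'v" and xi :: "'m \<Rightarrow> 'v" and eta :: "'m \<Rightarrow> 'v \<Rightarrow> real"
    and g :: "'m \<Rightarrow> 'v \<Rightarrow> 'v \<Rightarrow> real" and V :: "'m \<Rightarrow> 'v set" and k :: nat
  assumes "connected M"
    and "almost_contact_metric_manifold M T ph xi eta g"
    and "cont_distribution M T V k"
    and "phi_invariant M ph V"
  shows "(section_of M xi V \<or> section_of M xi (orth_distribution T g V)) \<and>
         (section_of M xi V \<longrightarrow>
            (\<forall>p\<in>M. orth_distribution T g V p \<subseteq> {X \<in> T p. eta p X = 0}))"
proof -
  have A: "\<And>p. p \<in> M \<Longrightarrow> acms_at (T p) (ph p) (xi p) (eta p) (g p)"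
    using assms(2) unfolding almost_contact_metric_manifold_def by blast
  have Vp: "\<And>p. p \<in> M \<Longrightarrow> subspace (V p) \<and> V p \<subseteq> T p \<and> dim (V p) = k"
    using assms(3) unfolding cont_distribution_def by blast
  have inv: "\<And>p. p \<in> M \<Longrightarrow> \<forall>X\<in>V p. ph p X \<in> V p"
    using assms(4) unfolding phi_invariant_def by blast
  have P1: "\<And>p. p \<in> M \<Longrightarrow> xi p \<in> V p \<Longrightarrow> odd k"
  proof -
    fix p assume p: "p \<in> M" and x: "xi p \<in> V p"
    have "odd (dim (V p))" using pointwise(1)[OF A[OF p] _ _ inv[OF p]] Vp[OF p] x by blast
    then show "odd k" using Vp[OF p] by simp
  qed
  have P2: "\<And>p. p \<in> M \<Longrightarrow> xi p \<notin> V p \<Longrightarrow> even k \<and> (\<forall>Y\<in>V p. g p (xi p) Y = 0)"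
  proof -
    fix p assume p: "p \<in> M" and x: "xi p \<notin> V p"
    have "even (dim (V p)) \<and> (\<forall>Y\<in>V p. g p (xi p) Y = 0)"
      using pointwise(2)[OF A[OF p] _ _ inv[OF p]] Vp[OF p] x by blast
    then show "even k \<and> (\<forall>Y\<in>V p. g p (xi p) Y = 0)" using Vp[OF p] by simp
  qed
  have part1: "section_of M xi V \<or> section_of M xi (orth_distribution T g V)"
  proof (cases "odd k")
    case True
    then have "section_of M xi V" unfolding section_of_def using P2 by blast
    then show ?thesis by simp
  next
    case False
    have "section_of M xi (orth_distribution T g V)"
      unfolding section_of_def orth_distribution_def
    proof
      fix p assume p: "p \<in> M"
      have nv: "xi p \<notin> V p" using P1 p False by blast
      have "xi p \<in> T p" using acms_facts(2)[OF A[OF p]] .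
      then show "xi p \<in> {X \<in> T p. \<forall>Y\<in>V p. g p X Y = 0}" using P2[OF p nv] by simp
    qed
    then show ?thesis by simp
  qed
  have part2: "section_of M xi V \<longrightarrow>
            (\<forall>p\<in>M. orth_distribution T g V p \<subseteq> {X \<in> T p. eta p X = 0})"
  proof (intro impI ballI subsetI)
    fix p X assume s: "section_of M xi V" and p: "p \<in> M" and X: "X \<in> orth_distribution T g V p"
    have xV: "xi p \<in> V p" using s p unfolding section_of_def by blast
    have XT: "X \<in> T p" and "g p X (xi p) = 0" using X xV unfolding orth_distribution_def by auto
    then have "eta p X = 0" using acms_facts(10)[OF A[OF p] XT] by simp
    then show "X \<in> {X \<in> T p. eta p X = 0}" using XT by simp
  qed
  show ?thesis using part1 part2 by blast
qed

end
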